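(* For all integers $n\ge2$, $$\mathcal A_{2n-3}\cap\gamma_{n+1}(\mathcal R)=\mathcal A_{2n-1}.$$
   Context: $\mathcal R=\mathcal R(\mathbb F_2)$ is the Riordan group of pairs $(g,f)$ of formal power series over $\mathbb F_2$ with $g=1+\cdots$, $f=t+\cdots$, product $(g_1,f_1)(g_2,f_2)=(g_1\cdot(g_2\circ f_1),\,f_2\circ f_1)$; it is a pro-2 group with the $t$-adic topology. $\mathcal A=\{(g,t)\}$ is the Appell subgroup and $\mathcal A_m=\{(g,t):g\equiv1\pmod{t^{m+1}}\}$. The lower central series is $\gamma_1(\mathcal R)=\mathcal R$, $\gamma_i(\mathcal R)=[\gamma_{i-1}(\mathcal R),\mathcal R]$, where $[X,Y]$ is the smallest closed subgroup containing all commutators $x^{-1}y^{-1}xy$, $x\in X$, $y\in Y$. *)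

theory Defs
  imports "HOL-Library.Z2" "HOL-Computational_Algebra.Formal_Power_Series" "HOL-Algebra.Group"
begin

definition riordan :: "(bit fps \<times> bit fps) monoid" where
  "riordan = \<lparr> carrier = {(g, f). fps_nth (g) 0 = 1 \<and> fps_nth (f) 0 = 0 \<and> fps_nth (f) 1 = 1},
               mult = (\<lambda>(g1, f1) (g2, f2). (g1 * (g2 oo f1), f2 oo f1)),
               one = (1, fps_X) \<rparr>"

text \<open>Closedness in the t-adic topology (product topology on pairs of series):
  a set S is closed iff every point of the group that is approximated arbitrarily
  well (agreement of all coefficients below m, for every m) by points of S lies in S.\<close>
definition tadic_closed :: "(bit fps \<times> bit fps) set \<Rightarrow> bool" where
  "tadic_closed S \<longleftrightarrow> S \<subseteq> carrier riordan \<and>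
     (\<forall>p \<in> carrier riordan.
        (\<forall>m::nat. \<exists>s \<in> S. \<forall>k<m. fps_nth (fst s) k = fps_nth (fst p) k \<and> fps_nth (snd s) k = fps_nth (snd p) k)
        \<longrightarrow> p \<in> S)"

definition commutator :: "bit fps \<times> bit fps \<Rightarrow> bit fps \<times> bit fps \<Rightarrow> bit fps \<times> bit fps" where
  "commutator x y = inv\<^bsub>riordan\<^esub> x \<otimes>\<^bsub>riordan\<^esub> inv\<^bsub>riordan\<^esub> y
                      \<otimes>\<^bsub>riordan\<^esub> x \<otimes>\<^bsub>riordan\<^esub> y"

definition comm_sub :: "(bit fps \<times> bit fps) set \<Rightarrow> (bit fps \<times> bit fps) set \<Rightarrow> (bit fps \<times> bit fps) set" where
  "comm_sub X Y = \<Inter> {H. subgroup H riordan \<and> tadic_closed H \<and>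
                          {commutator x y | x y. x \<in> X \<and> y \<in> Y} \<subseteq> H}"

primrec lcs :: "nat \<Rightarrow> (bit fps \<times> bit fps) set" where
  "lcs 0 = carrier riordan"
| "lcs (Suc i) = comm_sub (lcs i) (carrier riordan)"

definition gamma :: "nat \<Rightarrow> (bit fps \<times> bit fps) set" where
  "gamma i = lcs (i - 1)"

definition appell :: "nat \<Rightarrow> (bit fps \<times> bit fps) set" where
  "appell m = {(g, fps_X) | g. \<forall>k\<le>m. fps_nth (g) k = fps_nth ((1 :: bit fps)) k}"

end

theory Submission
  imports Defs
begin

unbundle fps_syntax


lemma bit_add_self [simp]: "(x::bit) + x = 0"
  by (cases x) simp_all

lemma fps_bit_add_self [simp]: "(p::bit fps) + p = 0"
  by (rule fps_ext) (simp only: fps_add_nth bit_add_self fps_zero_nth)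

lemma fps_bit_minus [simp]: "- (p::bit fps) = p"
  by (rule fps_ext) simp

lemma fps_bit_diff: "(p::bit fps) - q = p + q"
  by (rule fps_ext) simp

lemma fps_two_bit [simp]: "(2::bit fps) = 0"
  by (metis one_add_one fps_bit_add_self)

lemma fps_bit_sq: "((p::bit fps) + q)^2 = p^2 + q^2"
proof -
  have "(p + q)^2 = p^2 + q^2 + (p*q + p*q)" by (simp add: power2_eq_square algebra_simps)
  then show ?thesis by simp
qed

lemma X_pow_dvd_iff: "fps_X ^ k dvd (p::bit fps) \<longleftrightarrow> (\<forall>i<k. p $ i = 0)"
proof
  assume "fps_X ^ k dvd p"
  then obtain r where "p = fps_X ^ k * r" by (auto elim: dvdE)
  then show "\<forall>i<k. p $ i = 0" by (simp add: fps_X_power_mult_nth)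
next
  assume h: "\<forall>i<k. p $ i = 0"
  show "fps_X ^ k dvd p"
  proof (cases "p = 0")
    case True then show ?thesis by simp
  next
    case False
    then have "subdegree p \<ge> k" using h by (intro subdegree_geI) auto
    then have "fps_shift k p * fps_X ^ k = p" by (rule fps_shift_times_fps_X_power)
    then show ?thesis by (metis dvd_triv_right)
  qed
qed

definition cg :: "nat \<Rightarrow> bit fps \<Rightarrow> bit fps \<Rightarrow> bool" where
  "cg k p q \<longleftrightarrow> fps_X ^ k dvd (p - q)"

lemma cg_coeff: "cg k p q \<longleftrightarrow> (\<forall>i<k. p $ i = q $ i)"
  unfolding cg_def X_pow_dvd_iff by (simp only: fps_sub_nth right_minus_eq)

lemma cg_refl [simp]: "cg k p p" by (simp add: cg_def)
lemma cg_sym: "cg k p q \<Longrightarrow> cg k q p" by (simp add: cg_coeff)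
lemma cg_trans: "cg k p q \<Longrightarrow> cg k q r \<Longrightarrow> cg k p r" by (simp add: cg_coeff)
lemma cg_add: "cg k p q \<Longrightarrow> cg k r s \<Longrightarrow> cg k (p + r) (q + s)" by (simp add: cg_coeff)
lemma cg_mono: "cg k p q \<Longrightarrow> j \<le> k \<Longrightarrow> cg j p q" by (simp add: cg_coeff)
lemma cg_0 [simp]: "cg 0 p q" by (simp add: cg_coeff)

lemma cg_mult: "cg k p q \<Longrightarrow> cg k r s \<Longrightarrow> cg k (p * r) (q * s)"
proof -
  assume "cg k p q" "cg k r s"
  then have "fps_X ^ k dvd (p - q)" "fps_X ^ k dvd (r - s)" by (auto simp: cg_def)
  then have "fps_X ^ k dvd ((p - q) * r + q * (r - s))" by (simp add: dvd_add dvd_mult2 dvd_mult)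
  moreover have "(p - q) * r + q * (r - s) = p * r - q * s" by (simp add: algebra_simps)
  ultimately show ?thesis by (simp add: cg_def)
qed

lemma cg_power: "cg k p q \<Longrightarrow> cg k (p ^ i) (q ^ i)"
  by (induction i) (auto intro: cg_mult)

lemma cg_shift: "cg k p q \<Longrightarrow> cg (j + k) (fps_X ^ j * p) (fps_X ^ j * q)"
proof -
  assume "cg k p q"
  then obtain r where "p - q = fps_X ^ k * r" by (auto simp: cg_def elim: dvdE)
  then have "fps_X ^ j * p - fps_X ^ j * q = fps_X ^ (j + k) * r" by (simp add: algebra_simps power_add)
  then show ?thesis by (simp add: cg_def)
qed

lemma cg_zero_mult: "cg k p 0 \<Longrightarrow> cg j q 0 \<Longrightarrow> cg (k + j) (p * q) 0"
proof -
  assume "cg k p 0" "cg j q 0"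
  then obtain r s where "p = fps_X ^ k * r" "q = fps_X ^ j * s" by (auto simp: cg_def elim!: dvdE)
  then have "p * q = fps_X ^ (k + j) * (r * s)" by (simp add: algebra_simps power_add)
  then show ?thesis by (simp add: cg_def)
qed

lemma cg_compose_right:
  assumes "f $ 0 = 0" "g $ 0 = 0" "cg k f g"
  shows "cg k (p oo f) (p oo g)"
proof -
  have "\<And>i n. n < k \<Longrightarrow> (f ^ i) $ n = (g ^ i) $ n"
    using cg_power[OF assms(3)] by (simp add: cg_coeff)
  then show ?thesis by (simp add: cg_coeff fps_compose_nth)
qed

lemma cg_compose_left:
  assumes "b $ 0 = 0" "cg k p q"
  shows "cg k (p oo b) (q oo b)"
proof -
  obtain r where r: "p - q = fps_X ^ k * r" using assms(2) by (auto simp: cg_def elim: dvdE)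
  have "(p oo b) - (q oo b) = (p - q) oo b" by (simp add: fps_compose_sub_distrib)
  also have "\<dots> = b ^ k * (r oo b)"
    using assms(1) by (simp add: r fps_compose_mult_distrib fps_X_power_compose)
  finally have e: "(p oo b) - (q oo b) = b ^ k * (r oo b)" .
  have "fps_X ^ 1 dvd b" using assms(1) unfolding X_pow_dvd_iff by simp
  then have "fps_X dvd b" by simp
  then have "fps_X ^ k dvd b ^ k" by (rule dvd_power_same)
  then show ?thesis unfolding cg_def e by simp
qed

lemma fps_inv_0: "fps_inv a $ 0 = 0"
  by (simp add: fps_inv_def)

lemma cg_compose_cancel:
  assumes "h $ 0 = 0" "h $ 1 \<noteq> 0" "cg k (p oo h) (q oo h)"
  shows "cg k p q"
proof -
  have "cg k ((p oo h) oo fps_inv h) ((q oo h) oo fps_inv h)"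
    by (rule cg_compose_left[OF fps_inv_0 assms(3)])
  moreover have "(r oo h) oo fps_inv h = r" for r
    using fps_compose_assoc[where a=r and b=h and c="fps_inv h", OF fps_inv_0 assms(1)] fps_inv_right[OF assms(1,2)] by simp
  ultimately show ?thesis by simp
qed

lemma cg_unit_cancel:
  assumes "u $ 0 \<noteq> 0" "cg k (u * p) (u * q)"
  shows "cg k p q"
proof -
  have "cg k (inverse u * (u * p)) (inverse u * (u * q))" by (rule cg_mult[OF cg_refl assms(2)])
  then show ?thesis using inverse_mult_eq_1[OF assms(1)] by (simp add: mult.assoc[symmetric])
qed

lemma compose_nth1: "b $ 0 = 0 \<Longrightarrow> (a oo b) $ 1 = a $ 1 * (b $ 1 :: bit)"
  by (simp add: fps_compose_nth)



lemma R_carrier: "(g, f) \<in> carrier riordan \<longleftrightarrow> g $ 0 = 1 \<and> f $ 0 = 0 \<and> f $ 1 = 1"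
  by (simp add: riordan_def)

lemma R_mult: "(g1, f1) \<otimes>\<^bsub>riordan\<^esub> (g2, f2) = (g1 * (g2 oo f1), f2 oo f1)"
  by (simp add: riordan_def)

lemma R_one: "\<one>\<^bsub>riordan\<^esub> = (1, fps_X)"
  by (simp add: riordan_def)

lemma fps_inv_1: "fps_inv (a::bit fps) $ 1 = 1 / a $ 1"
  by (simp add: fps_inv_def numeral_eq_Suc)

lemma compose_nth1': "b $ 0 = 0 \<Longrightarrow> (a oo b) $ Suc 0 = a $ Suc 0 * (b $ Suc 0 :: bit)"
  using compose_nth1 by simp

lemma R_group: "group riordan"
proof (rule groupI)
  fix x y assume "x \<in> carrier riordan" "y \<in> carrier riordan"
  then show "x \<otimes>\<^bsub>riordan\<^esub> y \<in> carrier riordan"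
    by (cases x, cases y) (auto simp: R_carrier R_mult compose_nth1' fps_mult_nth)
next
  show "\<one>\<^bsub>riordan\<^esub> \<in> carrier riordan" by (simp add: R_one R_carrier)
next
  fix x y z assume "x \<in> carrier riordan" "y \<in> carrier riordan" "z \<in> carrier riordan"
  then show "(x \<otimes>\<^bsub>riordan\<^esub> y) \<otimes>\<^bsub>riordan\<^esub> z = x \<otimes>\<^bsub>riordan\<^esub> (y \<otimes>\<^bsub>riordan\<^esub> z)"
    by (cases x, cases y, cases z)
       (auto simp: R_carrier R_mult fps_compose_mult_distrib fps_compose_assoc mult.assoc)
next
  fix x assume "x \<in> carrier riordan"
  then show "\<one>\<^bsub>riordan\<^esub> \<otimes>\<^bsub>riordan\<^esub> x = x"
    by (cases x) (auto simp: R_carrier R_mult R_one)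
next
  fix x assume x: "x \<in> carrier riordan"
  obtain g f where gf: "x = (g, f)" by (cases x)
  have g0: "g $ 0 = 1" and f0: "f $ 0 = 0" and f1: "f $ 1 = 1" using x gf by (auto simp: R_carrier)
  let ?fi = "fps_inv f"
  have fi0: "?fi $ 0 = 0" by (rule fps_inv_0)
  have fi1: "?fi $ 1 = 1" using f1 fps_inv_1[of f] by simp
  have c0: "(g oo ?fi) $ 0 \<noteq> 0" using g0 by simp
  let ?y = "(inverse (g oo ?fi), ?fi)"
  have "?y \<in> carrier riordan" using fi0 fi1 g0 by (simp add: R_carrier)
  moreover have "?y \<otimes>\<^bsub>riordan\<^esub> x = \<one>\<^bsub>riordan\<^esub>"
    using inverse_mult_eq_1[OF c0] fps_inv_right[of f] f0 f1
    by (simp add: gf R_mult R_one)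
  ultimately show "\<exists>y\<in>carrier riordan. y \<otimes>\<^bsub>riordan\<^esub> x = \<one>\<^bsub>riordan\<^esub>" by blast
qed



interpretation R: group riordan by (rule R_group)

definition GS :: "nat \<Rightarrow> (bit fps \<times> bit fps) set" where
  "GS k = {(g, f). (g, f) \<in> carrier riordan \<and> cg k g 1 \<and> cg (k + 2) f fps_X}"

lemma cg2_X: "h $ 0 = 0 \<Longrightarrow> h $ 1 = 1 \<Longrightarrow> cg 2 h fps_X"
  by (auto simp: cg_coeff less_2_cases_iff)

lemma cg_decomp: "cg k p q \<Longrightarrow> \<exists>r. p = q + fps_X ^ k * r"
proof -
  assume "cg k p q"
  then obtain r where "p - q = fps_X ^ k * r" by (auto simp: cg_def elim: dvdE)
  then have "p = q + fps_X ^ k * r" by (metis add_diff_cancel_left' diff_add_cancel)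
  then show ?thesis by blast
qed

lemma cg_zeroI: "cg k (fps_X ^ k * r) 0"
  by (simp add: cg_def)

lemma near:
  assumes P: "P \<in> carrier riordan" and Q: "Q \<in> carrier riordan"
    and "cg k (fst P) (fst Q)" "cg (k + 2) (snd P) (snd Q)"
  shows "inv\<^bsub>riordan\<^esub> P \<otimes>\<^bsub>riordan\<^esub> Q \<in> GS k"
proof -
  obtain G F where PGF: "P = (G, F)" by (cases P)
  obtain G' F' where QGF: "Q = (G', F')" by (cases Q)
  define c where "c = inv\<^bsub>riordan\<^esub> P \<otimes>\<^bsub>riordan\<^esub> Q"
  have iP: "inv\<^bsub>riordan\<^esub> P \<in> carrier riordan" using P by (rule R.inv_closed)
  have cC: "c \<in> carrier riordan" unfolding c_def using iP Q by (rule R.m_closed)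
  have "P \<otimes>\<^bsub>riordan\<^esub> c = (P \<otimes>\<^bsub>riordan\<^esub> inv\<^bsub>riordan\<^esub> P) \<otimes>\<^bsub>riordan\<^esub> Q"
    unfolding c_def by (rule R.m_assoc[symmetric, OF P iP Q])
  also have "\<dots> = Q" using P Q by (simp only: R.r_inv[OF P] R.l_one[OF Q])
  finally have PcQ: "P \<otimes>\<^bsub>riordan\<^esub> c = Q" .
  obtain u v where c: "c = (u, v)" by (cases c)
  have G0: "G $ 0 = 1" and F0: "F $ 0 = 0" and F1: "F $ 1 = 1" using P PGF by (auto simp: R_carrier)
  have eq: "G * (u oo F) = G'" "v oo F = F'"
    using PcQ unfolding PGF QGF c R_mult by simp_all
  have vF: "cg (k + 2) (v oo F) (fps_X oo F)"
    using cg_sym[OF assms(4)] F0 by (simp add: PGF QGF eq)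
  have v: "cg (k + 2) v fps_X" by (rule cg_compose_cancel[OF F0 _ vF]) (insert F1, simp)
  have GuF: "cg k (G * (u oo F)) (G * (1 oo F))" using cg_sym[OF assms(3)] by (simp add: PGF QGF eq)
  have uF: "cg k (u oo F) (1 oo F)" by (rule cg_unit_cancel[OF _ GuF]) (simp add: G0)
  have u: "cg k u 1" by (rule cg_compose_cancel[OF F0 _ uF]) (insert F1, simp)
  show ?thesis using cC u v by (simp add: c_def[symmetric] c GS_def)
qed

lemma GS_subgroup: "subgroup (GS k) riordan"
proof (rule R.subgroupI)
  show "GS k \<subseteq> carrier riordan" by (auto simp: GS_def)
  have "(1, fps_X) \<in> GS k" by (simp add: GS_def R_carrier)
  then show "GS k \<noteq> {}" by blast
next
  fix a assume a: "a \<in> GS k"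
  then have aC: "a \<in> carrier riordan" by (auto simp: GS_def)
  have "inv\<^bsub>riordan\<^esub> a \<otimes>\<^bsub>riordan\<^esub> \<one>\<^bsub>riordan\<^esub> \<in> GS k"
    using a by (intro near) (auto simp: GS_def R_one R_carrier)
  then show "inv\<^bsub>riordan\<^esub> a \<in> GS k" using aC by simp
next
  fix a b assume a: "a \<in> GS k" and b: "b \<in> GS k"
  obtain g1 f1 where a': "a = (g1, f1)" by (cases a)
  obtain g2 f2 where b': "b = (g2, f2)" by (cases b)
  have f10: "f1 $ 0 = 0" using a a' by (auto simp: GS_def R_carrier)
  have "a \<otimes>\<^bsub>riordan\<^esub> b \<in> carrier riordan" using a b by (auto simp: GS_def)
  moreover have "cg k (g1 * (g2 oo f1)) (1 * (1 oo f1))"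
    using a b a' b' f10 by (intro cg_mult cg_compose_left) (auto simp: GS_def)
  moreover have "cg (k + 2) (f2 oo f1) (fps_X oo f1)"
    using b b' f10 by (intro cg_compose_left) (auto simp: GS_def)
  moreover have "cg (k + 2) f1 fps_X" using a a' by (auto simp: GS_def)
  ultimately show "a \<otimes>\<^bsub>riordan\<^esub> b \<in> GS k"
    using f10 by (auto simp: a' b' R_mult GS_def intro: cg_trans)
qed

lemma GS_closed: "tadic_closed (GS k)"
  unfolding tadic_closed_def
proof (intro conjI ballI impI)
  show "GS k \<subseteq> carrier riordan" by (auto simp: GS_def)
  fix p assume pC: "p \<in> carrier riordan"
    and h: "\<forall>m. \<exists>s\<in>GS k. \<forall>k<m. fst s $ k = fst p $ k \<and> snd s $ k = snd p $ k"
  from h obtain s where s: "s \<in> GS k" "\<forall>i<k+2. fst s $ i = fst p $ i \<and> snd s $ i = snd p $ i"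
    by blast
  obtain sg sf where s': "s = (sg, sf)" by (cases s)
  obtain pg pf where p': "p = (pg, pf)" by (cases p)
  have "cg k pg 1" using s s' p' by (auto simp: GS_def cg_coeff)
  moreover have "cg (k+2) pf fps_X" using s s' p' by (auto simp: GS_def cg_coeff)
  ultimately show "p \<in> GS k" using pC p' by (simp add: GS_def)
qed

lemma commutator_alt:
  assumes "x \<in> carrier riordan" "y \<in> carrier riordan"
  shows "commutator x y = inv\<^bsub>riordan\<^esub> (y \<otimes>\<^bsub>riordan\<^esub> x) \<otimes>\<^bsub>riordan\<^esub> (x \<otimes>\<^bsub>riordan\<^esub> y)"
  using assms by (simp add: commutator_def R.inv_mult_group R.m_assoc)

lemma sq_form:
  assumes "h $ 0 = 0" "h $ 1 = 1"
  shows "\<exists>U. h ^ 2 = fps_X ^ 2 * U \<and> cg 2 U 1"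
proof -
  obtain r where r: "h = fps_X + fps_X ^ 2 * r" using cg_decomp[OF cg2_X[OF assms]] by blast
  have "h ^ 2 = fps_X ^ 2 + (fps_X ^ 2 * r) ^ 2" unfolding r by (rule fps_bit_sq)
  also have "\<dots> = fps_X ^ 2 * (1 + fps_X ^ 2 * r ^ 2)" by (simp add: algebra_simps power_mult_distrib)
  finally have "h ^ 2 = fps_X ^ 2 * (1 + fps_X ^ 2 * r ^ 2)" .
  moreover have "cg 2 (1 + fps_X ^ 2 * r ^ 2) 1" by (simp add: cg_def)
  ultimately show ?thesis by blast
qed

lemma even_compose:
  assumes h0: "h $ 0 = 0" and h1: "h $ 1 = 1"
  shows "cg (2 * m + 2) ((fps_X ^ (2 * m) * s) oo h) (fps_X ^ (2 * m) * s)"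
proof -
  obtain U where U: "h ^ 2 = fps_X ^ 2 * U" "cg 2 U 1" using sq_form[OF assms] by blast
  have "(fps_X ^ (2 * m) * s) oo h = h ^ (2 * m) * (s oo h)"
    using h0 by (simp add: fps_compose_mult_distrib fps_X_power_compose)
  also have "h ^ (2 * m) = fps_X ^ (2 * m) * U ^ m"
    by (simp add: power_mult U(1) power_mult_distrib)
  finally have e: "(fps_X ^ (2 * m) * s) oo h = fps_X ^ (2 * m) * (U ^ m * (s oo h))"
    by (simp add: mult.assoc)
  have "cg 2 (U ^ m * (s oo h)) (1 ^ m * (s oo fps_X))"
    using h0 h1 by (intro cg_mult cg_power U(2) cg_compose_right cg2_X) auto
  then have "cg 2 (U ^ m * (s oo h)) s" by simp
  from cg_shift[OF this, of "2 * m"] show ?thesis unfolding e by simp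
qed



lemma comm_GS:
  assumes x: "x \<in> GS (2 * n)" and y: "y \<in> carrier riordan"
  shows "commutator x y \<in> GS (2 * n + 2)"
proof -
  obtain g f where xgf: "x = (g, f)" by (cases x)
  obtain a h where yah: "y = (a, h)" by (cases y)
  have xC: "x \<in> carrier riordan" using x by (auto simp: GS_def)
  have g0: "g $ 0 = 1" and f0: "f $ 0 = 0" and f1: "f $ 1 = 1"
    and cgg: "cg (2 * n) g 1" and cgf: "cg (2 * n + 2) f fps_X"
    using x xgf by (auto simp: GS_def R_carrier)
  have a0: "a $ 0 = 1" and h0: "h $ 0 = 0" and h1: "h $ 1 = 1"
    using y yah by (auto simp: R_carrier)
  have yx: "y \<otimes>\<^bsub>riordan\<^esub> x = (a * (g oo h), f oo h)" by (simp add: xgf yah R_mult)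
  have xy: "x \<otimes>\<^bsub>riordan\<^esub> y = (g * (a oo f), h oo f)" by (simp add: xgf yah R_mult)
  obtain s where s: "g = 1 + fps_X ^ (2 * n) * s" using cg_decomp[OF cgg] by blast
  have "g oo h = 1 + ((fps_X ^ (2 * n) * s) oo h)" by (simp add: s fps_compose_add_distrib)
  moreover have "cg (2 * n + 2) ((fps_X ^ (2 * n) * s) oo h) (fps_X ^ (2 * n) * s)"
    by (rule even_compose[OF h0 h1])
  ultimately have "cg (2 * n + 2) (g oo h) g" unfolding s by (metis cg_add cg_refl)
  then have A1: "cg (2 * n + 2) (a * (g oo h)) (a * g)" by (intro cg_mult cg_refl)
  have "cg (2 * n + 2) (a oo f) (a oo fps_X)" by (rule cg_compose_right[OF f0 _ cgf]) simp
  then have "cg (2 * n + 2) (g * (a oo f)) (g * a)" by (intro cg_mult cg_refl) simp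
  then have A2: "cg (2 * n + 2) (g * a) (g * (a oo f))" by (rule cg_sym)
  have A: "cg (2 * n + 2) (a * (g oo h)) (g * (a oo f))"
    using cg_trans[OF A1 A2[unfolded mult.commute[of g a]]] by (simp add: mult.commute)
  have e2: "2 * n + 2 = 2 * (n + 1)" by simp
  obtain t where t: "f = fps_X + fps_X ^ (2 * (n + 1)) * t" using cg_decomp[OF cgf[unfolded e2]] by blast
  define d where "d = fps_X ^ (2 * (n + 1)) * t"
  have fd: "f = fps_X + d" by (simp add: t d_def)
  have "f oo h = h + (d oo h)" using h0 by (simp add: fd fps_compose_add_distrib)
  moreover have "cg (2 * (n + 1) + 2) (d oo h) d" unfolding d_def by (rule even_compose[OF h0 h1])
  ultimately have L1: "cg (2 * n + 4) (f oo h) (h + d)" by (metis cg_add cg_refl e2 add.assoc numeral_Bit0 one_plus_numeral semiring_norm(2))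
  obtain r where r: "h = fps_X + fps_X ^ 2 * r" using cg_decomp[OF cg2_X[OF h0 h1]] by blast
  have "h oo f = f + (f ^ 2 * (r oo f))"
    using f0 by (simp add: r fps_compose_add_distrib fps_compose_mult_distrib fps_X_power_compose)
  also have "f ^ 2 = fps_X ^ 2 + d ^ 2" unfolding fd by (rule fps_bit_sq)
  finally have hf: "h oo f = f + fps_X ^ 2 * (r oo f) + d ^ 2 * (r oo f)" by (simp add: algebra_simps)
  have "cg (2 * n + 2) (r oo f) (r oo fps_X)" by (rule cg_compose_right[OF f0 _ cgf]) simp
  then have "cg (2 + (2 * n + 2)) (fps_X ^ 2 * (r oo f)) (fps_X ^ 2 * (r oo fps_X))" by (rule cg_shift)
  then have B0: "cg (2 + (2 * n + 2)) (fps_X ^ 2 * (r oo f)) (fps_X ^ 2 * r)" by simp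
  have e4: "2 + (2 * n + 2) = 2 * n + 4" by simp
  have B1: "cg (2 * n + 4) (fps_X ^ 2 * (r oo f)) (fps_X ^ 2 * r)" using B0 unfolding e4 .
  have deq: "d ^ 2 * (r oo f) = fps_X ^ (2 * n + 4) * (fps_X ^ (2 * n) * t ^ 2 * (r oo f))"
    by (simp add: d_def power_mult_distrib algebra_simps flip: power_mult power_add)
  have B2: "cg (2 * n + 4) (d ^ 2 * (r oo f)) 0" unfolding deq by (rule cg_zeroI)
  have "cg (2 * n + 4) (h oo f) (f + fps_X ^ 2 * r + 0)"
    unfolding hf by (intro cg_add B1 B2 cg_refl)
  then have L2: "cg (2 * n + 4) (h oo f) (h + d)" by (simp add: fd r algebra_simps)
  have e42: "2 * n + 4 = 2 * n + 2 + 2" by simp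
  have L: "cg (2 * n + 2 + 2) (f oo h) (h oo f)"
    using cg_trans[OF L1 cg_sym[OF L2]] unfolding e42 .
  have "commutator x y = inv\<^bsub>riordan\<^esub> (y \<otimes>\<^bsub>riordan\<^esub> x) \<otimes>\<^bsub>riordan\<^esub> (x \<otimes>\<^bsub>riordan\<^esub> y)"
    by (rule commutator_alt[OF xC y])
  also have "\<dots> \<in> GS (2 * n + 2)"
    using A L xC y by (intro near R.m_closed) (simp_all add: yx xy)
  finally show ?thesis .
qed

lemma lcs_GS: "lcs n \<subseteq> GS (2 * n)"
proof (induction n)
  case 0
  show ?case by (auto simp: GS_def R_carrier cg_coeff less_Suc_eq)
next
  case (Suc n)
  have "GS (2 * n + 2) \<in> {H. subgroup H riordan \<and> tadic_closed H \<and>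
            {commutator x y | x y. x \<in> lcs n \<and> y \<in> carrier riordan} \<subseteq> H}"
    using Suc.IH comm_GS by (auto simp: GS_subgroup GS_closed)
  then have "comm_sub (lcs n) (carrier riordan) \<subseteq> GS (2 * n + 2)"
    unfolding comm_sub_def by (rule Inter_lower)
  then show ?case by simp
qed



lemma bit_ne_add1: "(a::bit) \<noteq> b \<Longrightarrow> a + 1 = b"
  by (cases a; cases b) simp_all

lemma comm_elem:
  assumes m: "odd m" and mN: "m < N"
  shows "\<exists>y\<in>carrier riordan. \<exists>u. commutator (1 + fps_X ^ m, fps_X) y = (u, fps_X)
           \<and> cg (N + 1) u (1 + fps_X ^ N)"
proof -
  define j where "j = N - m"
  have j1: "j \<ge> 1" and Nj: "N = m + j" using mN by (auto simp: j_def)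
  define h :: "bit fps" where "h = fps_X + fps_X ^ (j + 1)"
  define a :: "bit fps" where "a = 1 + fps_X ^ m"
  have m1: "m \<ge> 1" using m by (cases m) auto
  have h0: "h $ 0 = 0" by (simp add: h_def)
  have h1: "h $ 1 = 1" using j1 by (simp add: h_def)
  have a0: "a $ 0 = 1" using m1 by (simp add: a_def)
  define x where "x = (a, fps_X :: bit fps)"
  define y where "y = (1 :: bit fps, h)"
  have xC: "x \<in> carrier riordan" using a0 by (simp add: x_def R_carrier)
  have yC: "y \<in> carrier riordan" using h0 h1 by (simp add: y_def R_carrier)
  define P where "P = y \<otimes>\<^bsub>riordan\<^esub> x"
  define Q where "Q = x \<otimes>\<^bsub>riordan\<^esub> y"
  have P: "P = (a oo h, h)" using h0 by (simp add: P_def x_def y_def R_mult)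
  have Q: "Q = (a, h)" by (simp add: Q_def x_def y_def R_mult)
  have PC: "P \<in> carrier riordan" using xC yC by (simp add: P_def)
  have QC: "Q \<in> carrier riordan" using xC yC by (simp add: Q_def)
  define c where "c = inv\<^bsub>riordan\<^esub> P \<otimes>\<^bsub>riordan\<^esub> Q"
  have comm: "commutator x y = c" unfolding c_def P_def Q_def by (rule commutator_alt[OF xC yC])
  have iP: "inv\<^bsub>riordan\<^esub> P \<in> carrier riordan" using PC by (rule R.inv_closed)
  have "P \<otimes>\<^bsub>riordan\<^esub> c = (P \<otimes>\<^bsub>riordan\<^esub> inv\<^bsub>riordan\<^esub> P) \<otimes>\<^bsub>riordan\<^esub> Q"
    unfolding c_def by (rule R.m_assoc[symmetric, OF PC iP QC])
  also have "\<dots> = Q" by (simp only: R.r_inv[OF PC] R.l_one[OF QC])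
  finally have PcQ: "P \<otimes>\<^bsub>riordan\<^esub> c = Q" .
  obtain u v where c: "c = (u, v)" by (cases c)
  have eq: "(a oo h) * (u oo h) = a" "v oo h = h"
    using PcQ unfolding P Q c R_mult by simp_all
  have "v oo h = fps_X oo h" using eq(2) h0 by simp
  then have v: "v = fps_X" using fps_compose_inj_right[OF h0] h1 by simp
  have hX: "h = fps_X * (1 + fps_X ^ j)" by (simp add: h_def algebra_simps)
  obtain q where q: "m = 2 * q + 1" using m by (auto elim: oddE)
  have sq: "(1 + fps_X ^ j) ^ 2 = (1 :: bit fps) + fps_X ^ (2 * j)"
    by (simp add: fps_bit_sq power_mult[symmetric] mult.commute)
  have "(1 + fps_X ^ j) ^ m = (1 + fps_X ^ j) * (((1 :: bit fps) + fps_X ^ j) ^ 2) ^ q"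
    by (metis q power_add power_mult power_one_right mult.commute)
  also have "\<dots> = (1 + fps_X ^ j) * ((1 :: bit fps) + fps_X ^ (2 * j)) ^ q"
    by (simp only: sq)
  finally have "(1 + fps_X ^ j) ^ m = (1 + fps_X ^ j) * ((1 :: bit fps) + fps_X ^ (2 * j)) ^ q" .
  moreover have "cg (2 * j) ((1 + fps_X ^ j) * ((1 :: bit fps) + fps_X ^ (2 * j)) ^ q) ((1 + fps_X ^ j) * 1 ^ q)"
    by (intro cg_mult cg_power cg_refl) (simp add: cg_def)
  ultimately have "cg (2 * j) ((1 + fps_X ^ j) ^ m) (1 + fps_X ^ j)" by simp
  from cg_shift[OF this, of m] have c1: "cg (m + 2 * j) (fps_X ^ m * (1 + fps_X ^ j) ^ m) (fps_X ^ m * (1 + fps_X ^ j))" .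
  have hm: "h ^ m = fps_X ^ m * (1 + fps_X ^ j) ^ m" by (simp add: hX power_mult_distrib)
  have hm2: "fps_X ^ m * (1 + fps_X ^ j) = fps_X ^ m + (fps_X ^ N :: bit fps)" by (simp add: Nj power_add algebra_simps)
  have "cg (m + 2 * j) (h ^ m) (fps_X ^ m + fps_X ^ N)" using c1 unfolding hm hm2 .
  then have "cg (N + 1) (h ^ m) (fps_X ^ m + fps_X ^ N)" by (rule cg_mono) (use j1 Nj in simp)
  then have "cg (N + 1) (1 + h ^ m) (1 + (fps_X ^ m + fps_X ^ N))" by (intro cg_add cg_refl)
  moreover have "a oo h = 1 + h ^ m" using h0 by (simp add: a_def fps_compose_add_distrib fps_X_power_compose)
  ultimately have w: "cg (N + 1) (a oo h) (a + fps_X ^ N)" by (simp add: a_def add.assoc)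
  define w where "w = a oo h"
  have w0: "w $ 0 = 1" using a0 by (simp add: w_def)
  define p where "p = (u oo h) - 1"
  have wp: "w * p = a - w" using eq(1) by (simp add: p_def w_def algebra_simps)
  have aw: "cg (N + 1) (a + w) (a + (a + fps_X ^ N))" using cg_add[OF cg_refl w[folded w_def]] .
  have aa: "a + (a + fps_X ^ N) = fps_X ^ N" by (simp add: add.assoc[symmetric])
  have wpX: "cg (N + 1) (w * p) (fps_X ^ N)" using aw unfolding aa wp fps_bit_diff .
  have "cg N (w * p) (fps_X ^ N)" using wpX by (rule cg_mono) simp
  moreover have "cg N (fps_X ^ N) (w * 0)" using cg_zeroI[of N 1] by simp
  ultimately have "cg N (w * p) (w * 0)" by (rule cg_trans)
  then have "cg N p 0" by (rule cg_unit_cancel[rotated]) (simp add: w0)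
  then obtain p1 where p1: "p = fps_X ^ N * p1" using cg_decomp by fastforce
  obtain w1 where w1: "w = 1 + fps_X ^ 1 * w1" using cg_decomp[of 1 w 1] w0 by (auto simp: cg_coeff)
  have "w * p = p + fps_X ^ (N + 1) * (w1 * p1)" by (simp add: w1 p1 algebra_simps power_add)
  then have "cg (N + 1) (w * p) p" using cg_zeroI[of "N+1" "w1 * p1"] cg_add[OF cg_refl[of _ p]] by fastforce
  then have "cg (N + 1) p (fps_X ^ N)" using cg_trans[OF cg_sym wpX] by blast
  then have uh: "cg (N + 1) (u oo h) (1 + fps_X ^ N)"
    using cg_add[OF cg_refl[of _ 1]] unfolding p_def by (fastforce simp: fps_bit_diff algebra_simps)
  have "cg 1 (1 + fps_X ^ j) (1 :: bit fps)" using j1 by (simp add: cg_coeff)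
  then have "cg 1 ((1 + fps_X ^ j) ^ N) 1" using cg_power[of 1 _ 1 N] by simp
  from cg_shift[OF this, of N] have "cg (N + 1) (h ^ N) (fps_X ^ N)"
    by (simp add: hX power_mult_distrib add.commute)
  then have "cg (N + 1) ((1 + fps_X ^ N) oo h) (1 + fps_X ^ N)"
    using h0 by (simp add: fps_compose_add_distrib fps_X_power_compose cg_add)
  then have uhh: "cg (N + 1) (u oo h) ((1 + fps_X ^ N) oo h)" using cg_trans[OF uh cg_sym] by blast
  have u: "cg (N + 1) u (1 + fps_X ^ N)" by (rule cg_compose_cancel[OF h0 _ uhh]) (insert h1, simp)
  show ?thesis using yC comm u unfolding x_def a_def c v by blast
qed



lemma LB:
  assumes m: "odd m" and x0: "(1 + fps_X ^ m, fps_X) \<in> S"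
  shows "appell m \<subseteq> comm_sub S (carrier riordan)"
proof
  fix b assume "b \<in> appell m"
  then obtain g where b: "b = (g, fps_X)" and gm: "\<forall>k\<le>m. g $ k = (1::bit fps) $ k"
    by (auto simp: appell_def)
  have g0: "g $ 0 = 1" using gm by auto
  have bC: "b \<in> carrier riordan" using g0 by (simp add: b R_carrier)
  show "b \<in> comm_sub S (carrier riordan)"
    unfolding comm_sub_def
  proof (rule InterI, clarify)
    fix H assume sub: "subgroup H riordan" and cl: "tadic_closed H"
      and cH: "{commutator x y |x y. x \<in> S \<and> y \<in> carrier riordan} \<subseteq> H"
    have one: "(1, fps_X) \<in> H" using subgroup.one_closed[OF sub] by (simp add: R_one)
    have step: "\<exists>s. (s, fps_X) \<in> H \<and> (\<forall>i<M. s $ i = g $ i) \<and> cg (m + 1) s 1" for M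
    proof (induction M)
      case 0
      show ?case using one by (intro exI[of _ 1]) simp
    next
      case (Suc M)
      then obtain s where s: "(s, fps_X) \<in> H" "\<forall>i<M. s $ i = g $ i" "cg (m + 1) s 1" by blast
      show ?case
      proof (cases "s $ M = g $ M")
        case True
        have "\<forall>i<Suc M. s $ i = g $ i" using s(2) True less_Suc_eq by auto
        then show ?thesis using s(1,3) by blast
      next
        case False
        have s0: "s $ 0 = 1" using s(3) by (simp add: cg_coeff)
        have mM: "m < M"
        proof (rule ccontr)
          assume "\<not> m < M"
          then have "s $ M = 1 $ M" "g $ M = (1 :: bit fps) $ M" using s(3) gm by (auto simp: cg_coeff)
          then show False using False by simp
        qed
        obtain y u where yC: "y \<in> carrier riordan"
          and cu: "commutator (1 + fps_X ^ m, fps_X) y = (u, fps_X)" and u: "cg (M + 1) u (1 + fps_X ^ M)"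
          using comm_elem[OF m mM] by blast
        have "commutator (1 + fps_X ^ m, fps_X) y \<in> {commutator x y |x y. x \<in> S \<and> y \<in> carrier riordan}"
          using x0 yC by blast
        then have "(u, fps_X) \<in> H" using cH unfolding cu by (rule subsetD[rotated])
        then have "(s, fps_X) \<otimes>\<^bsub>riordan\<^esub> (u, fps_X) \<in> H" using s(1) by (rule subgroup.m_closed[OF sub, rotated])
        then have sH: "(s * u, fps_X) \<in> H" by (simp add: R_mult)
        obtain r where r: "u = (1 + fps_X ^ M) + fps_X ^ (M + 1) * r" using cg_decomp[OF u] by blast
        have su: "s * u = s + fps_X ^ M * s + fps_X ^ (M + 1) * (s * r)" by (simp add: r algebra_simps)
        have co: "(s * u) $ i = g $ i" if "i < Suc M" for i
        proof -
          have z: "(fps_X ^ (M + 1) * (s * r)) $ i = 0" using that by (simp only: fps_X_power_mult_nth) simp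
          have xm: "(fps_X ^ M * s) $ i = (if i < M then 0 else s $ (i - M))" by (rule fps_X_power_mult_nth)
          have e: "(s * u) $ i = s $ i + (fps_X ^ M * s) $ i" by (simp only: su fps_add_nth z) simp
          show ?thesis
          proof (cases "i < M")
            case True
            then show ?thesis using s(2) by (simp add: e xm)
          next
            case False
            then have iM: "i = M" using that by simp
            have "(s * u) $ i = s $ M + s $ 0" using e xm False iM by simp
            then show ?thesis using s0 bit_ne_add1[OF \<open>s $ M \<noteq> g $ M\<close>] iM
              by simp
          qed
        qed
        have "cg (m + 1) u (1 + fps_X ^ M)" using u by (rule cg_mono) (use mM in simp)
        moreover have "cg (m + 1) (1 + fps_X ^ M) (1 :: bit fps)" using mM by (simp add: cg_coeff)
        ultimately have "cg (m + 1) u 1" by (rule cg_trans)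
        then have "cg (m + 1) (s * u) (1 * 1)" by (rule cg_mult[OF s(3)])
        then have "cg (m + 1) (s * u) 1" by simp
        then show ?thesis using sH co by blast
      qed
    qed
    have all: "\<forall>M. \<exists>s\<in>H. \<forall>k<M. fst s $ k = fst b $ k \<and> snd s $ k = snd b $ k"
    proof
      fix M
      obtain s where "(s, fps_X) \<in> H" "\<forall>i<M. s $ i = g $ i" using step by blast
      then show "\<exists>s\<in>H. \<forall>k<M. fst s $ k = fst b $ k \<and> snd s $ k = snd b $ k"
        by (intro bexI[of _ "(s, fps_X)"]) (auto simp: b)
    qed
    note cl2 = cl[unfolded tadic_closed_def, THEN conjunct2]
    show "b \<in> H" using mp[OF bspec[OF cl2 bC] all] .
  qed
qed

lemma appell_lcs: "appell (2 * k + 1) \<subseteq> lcs (Suc k)"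
proof (induction k)
  case 0
  have "(1 + fps_X ^ 1, fps_X) \<in> carrier riordan" by (simp add: R_carrier)
  from LB[OF _ this] show ?case by simp
next
  case (Suc k)
  have "(1 + fps_X ^ (2 * k + 3), fps_X) \<in> appell (2 * k + 1)"
    by (auto simp: appell_def)
  then have "(1 + fps_X ^ (2 * k + 3), fps_X) \<in> lcs (Suc k)" using Suc.IH by blast
  from LB[OF _ this] have "appell (2 * k + 3) \<subseteq> comm_sub (lcs (Suc k)) (carrier riordan)" by simp
  then show ?case by (simp add: numeral_eq_Suc)
qed

theorem corollary11:
  fixes n :: nat
  assumes "n \<ge> 2"
  shows "appell (2 * n - 3) \<inter> gamma (n + 1) = appell (2 * n - 1)"
proof -
  have g: "gamma (n + 1) = lcs n" by (simp add: gamma_def)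
  obtain k where k: "n = Suc k" using assms by (cases n) auto
  have lower: "appell (2 * n - 1) \<subseteq> lcs n"
    using appell_lcs[of k] by (simp add: k)
  have sub: "appell (2 * n - 1) \<subseteq> appell (2 * n - 3)"
    by (auto simp: appell_def)
  have upper: "appell (2 * n - 3) \<inter> lcs n \<subseteq> appell (2 * n - 1)"
  proof
    fix x assume x: "x \<in> appell (2 * n - 3) \<inter> lcs n"
    then obtain g where xg: "x = (g, fps_X)" by (auto simp: appell_def)
    have "x \<in> GS (2 * n)" using x lcs_GS by blast
    then have "cg (2 * n) g 1" by (simp add: xg GS_def)
    then show "x \<in> appell (2 * n - 1)" using assms by (auto simp: xg appell_def cg_coeff)
  qed
  show ?thesis unfolding g using lower sub upper by blast
qed

end
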